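(* Let $m=2k+1$ with $k\in\mathbb{N}$. For every $\beta\in(\frac{k+1+\sqrt{k^2+6k+5}}{2},m+1]$ there exists $x\in(0,\frac{m}{\beta-1})$ with a unique $\beta$-expansion, i.e. $|\Sigma_{\beta,m}(x)|=1$.
   Context: $\Sigma_{\beta,m}(x)=\{(\epsilon_i)_{i=1}^\infty\in\{0,\ldots,m\}^{\mathbb{N}}:\sum_{i\ge1}\epsilon_i\beta^{-i}=x\}$; its elements are the $\beta$-expansions of $x$. *)

theory Defs
  imports "HOL-Analysis.Analysis"
begin

text \<open>A sequence (eps_i)_{i>=1} is represented as eps :: nat => nat with
  eps n standing for eps_{n+1}; the value is sum_{n>=0} eps n * beta^-(n+1).\<close>
definition beta_expansions :: "real \<Rightarrow> nat \<Rightarrow> real \<Rightarrow> (nat \<Rightarrow> nat) set" where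
  "beta_expansions \<beta> m x =
     {\<epsilon>. (\<forall>n. \<epsilon> n \<le> m) \<and> (\<lambda>n. real (\<epsilon> n) / \<beta> ^ (Suc n)) sums x}"

end

theory Submission
  imports Defs
begin

lemma tail_sums:
  fixes e :: "nat \<Rightarrow> nat" and \<beta> y :: real
  assumes "(\<lambda>n. real (e n) / \<beta> ^ Suc n) sums y" "\<beta> \<noteq> 0"
  shows "(\<lambda>n. real (e (Suc n)) / \<beta> ^ Suc n) sums (\<beta> * y - e 0)"
proof -
  have "(\<lambda>n. real (e (Suc n)) / \<beta> ^ Suc (Suc n)) sums (y - e 0 / \<beta>)"
    using assms(1) sums_Suc_iff[of "\<lambda>n. real (e n) / \<beta> ^ Suc n" "y - e 0 / \<beta>"] by simp
  then have "(\<lambda>n. \<beta> * (real (e (Suc n)) / \<beta> ^ Suc (Suc n))) sums (\<beta> * (y - e 0 / \<beta>))"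
    by (rule sums_mult)
  moreover have "(\<lambda>n. \<beta> * (real (e (Suc n)) / \<beta> ^ Suc (Suc n))) = (\<lambda>n. real (e (Suc n)) / \<beta> ^ Suc n)"
    using assms(2) by (auto simp: field_simps)
  moreover have "\<beta> * (y - e 0 / \<beta>) = \<beta> * y - e 0" using assms(2) by (simp add: field_simps)
  ultimately show ?thesis by simp
qed

lemma geom_sums:
  fixes \<beta> :: real assumes "\<beta> > 1"
  shows "(\<lambda>n. real m / \<beta> ^ Suc n) sums (real m / (\<beta> - 1))"
proof -
  have "(\<lambda>n. (1/\<beta>) ^ n) sums (1 / (1 - 1/\<beta>))"
    by (rule geometric_sums) (use assms in auto)
  then have "(\<lambda>n. (real m / \<beta>) * (1/\<beta>) ^ n) sums ((real m / \<beta>) * (1 / (1 - 1/\<beta>)))"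
    by (rule sums_mult)
  moreover have "(\<lambda>n. (real m / \<beta>) * (1/\<beta>) ^ n) = (\<lambda>n. real m / \<beta> ^ Suc n)"
    by (auto simp: field_simps power_divide)
  moreover have "(real m / \<beta>) * (1 / (1 - 1/\<beta>)) = real m / (\<beta> - 1)"
    using assms by (simp add: field_simps)
  ultimately show ?thesis by metis
qed

lemma bounds:
  fixes e :: "nat \<Rightarrow> nat" and \<beta> y :: real
  assumes "(\<lambda>n. real (e n) / \<beta> ^ Suc n) sums y" "\<beta> > 1" "\<forall>n. e n \<le> m"
  shows "0 \<le> y \<and> y \<le> real m / (\<beta> - 1)"
proof
  show "0 \<le> y"
    by (rule sums_le[of "\<lambda>n. 0" _ 0 y]) (use assms in auto)
  show "y \<le> real m / (\<beta> - 1)"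
    by (rule sums_le[OF _ assms(1) geom_sums[OF assms(2)]])
       (use assms in \<open>auto intro!: divide_right_mono\<close>)
qed

lemma digit_bounds:
  fixes e :: "nat \<Rightarrow> nat" and \<beta> y :: real
  assumes "(\<lambda>n. real (e n) / \<beta> ^ Suc n) sums y" "\<beta> > 1" "\<forall>n. e n \<le> m"
  shows "\<beta> * y - real m / (\<beta> - 1) \<le> e 0 \<and> real (e 0) \<le> \<beta> * y"
proof -
  have t: "(\<lambda>n. real (e (Suc n)) / \<beta> ^ Suc n) sums (\<beta> * y - e 0)"
    using tail_sums assms by force
  have "0 \<le> \<beta> * y - e 0 \<and> \<beta> * y - e 0 \<le> real m / (\<beta> - 1)"
    using bounds[of "\<lambda>n. e (Suc n)", OF t] assms by auto
  then show ?thesis by auto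
qed

theorem proposition3p7:
  fixes k m :: nat and \<beta> :: real
  assumes "m = 2 * k + 1"
    and "(real k + 1 + sqrt (real k ^ 2 + 6 * real k + 5)) / 2 < \<beta>"
    and "\<beta> \<le> real m + 1"
  shows "\<exists>x. 0 < x \<and> x < real m / (\<beta> - 1) \<and> card (beta_expansions \<beta> m x) = 1"
proof -
  define r where "r = sqrt (real k ^ 2 + 6 * real k + 5)"
  have r2: "r^2 = real k ^ 2 + 6 * real k + 5" unfolding r_def by simp
  have r1: "r \<ge> 1" unfolding r_def by simp
  have b1: "\<beta> > 1" using assms(2) r1 unfolding r_def[symmetric] by simp
  have "\<beta> - (k+1)/2 > r/2" using assms(2) unfolding r_def[symmetric] by (simp add: field_simps)
  then have "(\<beta> - (k+1)/2)^2 > (r/2)^2"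
    using r1 by (intro power_strict_mono) auto
  then have key: "\<beta>^2 - (k+1)*\<beta> - (k+1) > 0"
    using r2 by (simp add: power2_eq_square field_simps)
  have D: "\<beta>^2 - 1 > 0" using b1 by (simp add: power2_eq_square) (metis less_1_mult)
  define a where "a = ((k+1)*\<beta> + k) / (\<beta>^2 - 1)"
  define b where "b = (k*\<beta> + k + 1) / (\<beta>^2 - 1)"
  have a1: "a < 1" unfolding a_def using D key by (simp add: field_simps)
  have ba: "b < a" unfolding a_def b_def using D b1 by (intro divide_strict_right_mono) (auto simp: algebra_simps)
  have b0: "0 < b" unfolding b_def using D b1 by (intro divide_pos_pos) (auto intro: add_nonneg_pos)
  have ab: "a + b = real m / (\<beta> - 1)"
  proof -
    have f: "\<beta>^2 - 1 = (\<beta>-1)*(\<beta>+1)" by (simp add: power2_eq_square algebra_simps)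
    have "a + b = ((2*k+1)*(\<beta>+1)) / ((\<beta>-1)*(\<beta>+1))"
      unfolding a_def b_def f[symmetric] by (simp add: add_divide_distrib[symmetric] algebra_simps)
    also have "\<dots> = (2*k+1) / (\<beta>-1)" using b1 by simp
    finally show ?thesis using assms(1) by simp
  qed
  have Ba: "\<beta> * a = k + 1 + b" unfolding a_def b_def using D
    by (simp add: field_simps power2_eq_square)
  have Bb: "\<beta> * b = k + a" unfolding a_def b_def using D
    by (simp add: field_simps power2_eq_square)
  have stepA: "e 0 = k + 1 \<and> (\<lambda>n. real (e (Suc n)) / \<beta> ^ Suc n) sums b"
    if "(\<lambda>n. real (e n) / \<beta> ^ Suc n) sums a" "\<forall>n. e n \<le> m" for e
  proof -
    have d: "\<beta> * a - real m / (\<beta> - 1) \<le> e 0 \<and> real (e 0) \<le> \<beta> * a"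
      using digit_bounds[OF that(1) b1 that(2)] .
    then have "real (e 0) < k + 2" "real (e 0) > k" using Ba ab a1 b0 ba by linarith+
    then have "e 0 = k + 1" by linarith
    moreover have "(\<lambda>n. real (e (Suc n)) / \<beta> ^ Suc n) sums (\<beta> * a - e 0)"
      using tail_sums that b1 by force
    ultimately show ?thesis using Ba by simp
  qed
  have stepB: "e 0 = k \<and> (\<lambda>n. real (e (Suc n)) / \<beta> ^ Suc n) sums a"
    if "(\<lambda>n. real (e n) / \<beta> ^ Suc n) sums b" "\<forall>n. e n \<le> m" for e
  proof -
    have d: "\<beta> * b - real m / (\<beta> - 1) \<le> e 0 \<and> real (e 0) \<le> \<beta> * b"
      using digit_bounds[OF that(1) b1 that(2)] .
    then have "real (e 0) < k + 1" "real (e 0) > real k - 1" using Bb ab a1 b0 ba by linarith+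
    then have "e 0 = k" by linarith
    moreover have "(\<lambda>n. real (e (Suc n)) / \<beta> ^ Suc n) sums (\<beta> * b - e 0)"
      using tail_sums that b1 by force
    ultimately show ?thesis using Bb by simp
  qed
  define s :: "nat \<Rightarrow> nat" where "s n = (if even n then k + 1 else k)" for n
  have sm: "\<forall>n. s n \<le> m" unfolding s_def assms(1) by auto
  have uniq: "e = s" if "(\<lambda>n. real (e n) / \<beta> ^ Suc n) sums a" "\<forall>n. e n \<le> m" for e
  proof -
    have all: "\<forall>n. (\<lambda>j. real (e (j + n)) / \<beta> ^ Suc j) sums (if even n then a else b)"
    proof
      fix n show "(\<lambda>j. real (e (j + n)) / \<beta> ^ Suc j) sums (if even n then a else b)"
      proof (induction n)
        case 0 then show ?case using that by simp
      next
        case (Suc n)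
        have dm: "\<forall>j. e (j + n) \<le> m" using that(2) by auto
        show ?case
        proof (cases "even n")
          case True
          then show ?thesis using stepA[of "\<lambda>j. e (j + n)"] Suc dm by simp
        next
          case False
          then show ?thesis using stepB[of "\<lambda>j. e (j + n)"] Suc dm by simp
        qed
      qed
    qed
    show "e = s"
    proof
      fix n
      have dm: "\<forall>j. e (j + n) \<le> m" using that(2) by auto
      have h: "(\<lambda>j. real (e (j + n)) / \<beta> ^ Suc j) sums (if even n then a else b)"
        using all by blast
      show "e n = s n"
      proof (cases "even n")
        case True
        then show ?thesis using stepA[of "\<lambda>j. e (j + n)"] h dm by (simp add: s_def)
      next
        case False
        then show ?thesis using stepB[of "\<lambda>j. e (j + n)"] h dm by (simp add: s_def)
      qed
    qed
  qed
  have summ: "summable (\<lambda>n. real (f n) / \<beta> ^ Suc n)" if "\<forall>n. f n \<le> m" for f :: "nat \<Rightarrow> nat"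
    by (rule summable_comparison_test[OF _ sums_summable[OF geom_sums[OF b1]]])
       (use that b1 in \<open>auto intro!: exI[of _ 0] divide_right_mono\<close>)
  have bne: "\<beta> \<noteq> 0" using b1 by linarith
  define S where "S = (\<Sum>n. real (s n) / \<beta> ^ Suc n)"
  define T where "T = (\<Sum>n. real (s (Suc n)) / \<beta> ^ Suc n)"
  have sS: "(\<lambda>n. real (s n) / \<beta> ^ Suc n) sums S"
    unfolding S_def using summ[OF sm] by (simp add: summable_sums)
  have sT: "(\<lambda>n. real (s (Suc n)) / \<beta> ^ Suc n) sums T"
    unfolding T_def using summ[of "\<lambda>n. s (Suc n)"] sm by (simp add: summable_sums)
  have e1: "T = \<beta> * S - (k+1)"
  proof -
    have s0: "real (s 0) = real k + 1" unfolding s_def by simp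
    have "T = \<beta> * S - real (s 0)" using sums_unique2[OF sT tail_sums[OF sS bne]] .
    then show ?thesis using s0 by linarith
  qed
  have ss: "(\<lambda>n. s (Suc (Suc n))) = s" by (auto simp: s_def)
  have e2: "S = \<beta> * T - k"
  proof -
    have "S = \<beta> * T - real (s (Suc 0))"
    proof -
      have ss': "s (Suc (Suc n)) = s n" for n by (simp add: s_def)
      have "(\<lambda>n. real (s (Suc (Suc n))) / \<beta> ^ Suc n) sums S" using sS by (simp only: ss')
      then show ?thesis using sums_unique2[OF _ tail_sums[of "\<lambda>n. s (Suc n)", OF sT bne]] by blast
    qed
    moreover have s1: "real (s (Suc 0)) = real k" unfolding s_def by simp
    ultimately show ?thesis by linarith
  qed
  have bt: "\<beta> * T = \<beta> * (\<beta> * S - (k+1))" using e1 by (simp only:)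
  have h: "S - (\<beta> * (\<beta> * S - (k+1)) - k) = 0" using bt e2 by linarith
  have eq: "S*(\<beta>^2-1) - ((k+1)*\<beta>+k) = -(S - (\<beta>*(\<beta>*S-(k+1))-k))"
    by (simp add: power2_eq_square algebra_simps)
  have Se: "S * (\<beta>^2 - 1) = (k+1)*\<beta> + k"
    using h eq by linarith
  have "S = (S * (\<beta>^2 - 1)) / (\<beta>^2 - 1)" using D by simp
  also have "\<dots> = a" unfolding a_def Se ..
  finally have "S = a" .
  then have sa: "(\<lambda>n. real (s n) / \<beta> ^ Suc n) sums a" using sS by simp
  have BE: "beta_expansions \<beta> m a = {s}"
  proof
    show "beta_expansions \<beta> m a \<subseteq> {s}"
    proof
      fix e assume "e \<in> beta_expansions \<beta> m a"
      then have "\<forall>n. e n \<le> m" "(\<lambda>n. real (e n) / \<beta> ^ Suc n) sums a"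
        unfolding beta_expansions_def by simp_all
      then show "e \<in> {s}" using uniq by blast
    qed
    show "{s} \<subseteq> beta_expansions \<beta> m a"
      unfolding beta_expansions_def using sa sm by simp
  qed
  have "0 < a" "a < real m / (\<beta> - 1)" using b0 ba ab by linarith+
  then show ?thesis using BE by (intro exI[of _ a]) simp
qed

end
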